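(* Let $G$ be a topological groupoid and $f\colon T\to G^{(0)}$ a continuous map. (a) If $G$ is proper, then $G[T]$ is proper. (b) If $G[T]$ is proper and $f$ is open and surjective, then $G$ is proper.
   Context: $G[T]=\{(t',t,g)\in(T\times T)\times G: g\in G^{f(t')}_{f(t)}\}$, a subgroupoid of the product of the pair groupoid $T\times T$ (product $(x,y)(y,z)=(x,z)$) with $G$, with the subspace topology; its unit space is $T$. A continuous map is proper if it is closed and has quasi-compact fibres (quasi-compact: every open cover has a finite subcover). A topological groupoid $H$ is proper if $(r,s)\colon H\to H^{(0)}\times H^{(0)}$ is proper. *)

theory Defs
  imports "HOL-Analysis.Analysis"
begin

text \<open>A topological groupoid: arrow space X (arrows G = topspace X), unit space U
 (units G0 = topspace U), range r, source s, unit map e, multiplication m on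
 composable pairs (s g = r h), inverse i.  The unit map e is continuous with
 continuous left inverse r, so G0 is identified with a subspace of G.\<close>

definition topological_groupoid ::
  "'a topology \<Rightarrow> 'u topology \<Rightarrow> ('a \<Rightarrow> 'u) \<Rightarrow> ('a \<Rightarrow> 'u) \<Rightarrow> ('u \<Rightarrow> 'a)
   \<Rightarrow> ('a \<Rightarrow> 'a \<Rightarrow> 'a) \<Rightarrow> ('a \<Rightarrow> 'a) \<Rightarrow> bool" where
  "topological_groupoid X U r s e m i \<longleftrightarrow>
     (\<forall>g\<in>topspace X. r g \<in> topspace U \<and> s g \<in> topspace U) \<and>
     (\<forall>x\<in>topspace U. e x \<in> topspace X \<and> r (e x) = x \<and> s (e x) = x) \<and>
     (\<forall>g\<in>topspace X. \<forall>h\<in>topspace X. s g = r h \<longrightarrow>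
        m g h \<in> topspace X \<and> r (m g h) = r g \<and> s (m g h) = s h) \<and>
     (\<forall>g\<in>topspace X. \<forall>h\<in>topspace X. \<forall>k\<in>topspace X. s g = r h \<and> s h = r k \<longrightarrow>
        m (m g h) k = m g (m h k)) \<and>
     (\<forall>g\<in>topspace X. m (e (r g)) g = g \<and> m g (e (s g)) = g) \<and>
     (\<forall>g\<in>topspace X. i g \<in> topspace X \<and> r (i g) = s g \<and> s (i g) = r g \<and>
        m g (i g) = e (r g) \<and> m (i g) g = e (s g)) \<and>
     continuous_map X U r \<and> continuous_map X U s \<and> continuous_map U X e \<and>
     continuous_map X X i \<and>
     continuous_map
       (subtopology (prod_topology X X)
          {(g, h). g \<in> topspace X \<and> h \<in> topspace X \<and> s g = r h})
       X (\<lambda>(g, h). m g h)"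

text \<open>A topological groupoid is proper if (r,s) : H \<rightarrow> H0 \<times> H0 is a proper map
 (closed with quasi-compact fibres; this is the library's proper_map / compactin).\<close>

definition proper_groupoid ::
  "'a topology \<Rightarrow> 'u topology \<Rightarrow> ('a \<Rightarrow> 'u) \<Rightarrow> ('a \<Rightarrow> 'u) \<Rightarrow> bool" where
  "proper_groupoid X U r s \<longleftrightarrow> proper_map X (prod_topology U U) (\<lambda>g. (r g, s g))"

definition pullback_arrows ::
  "'t topology \<Rightarrow> 'a topology \<Rightarrow> ('a \<Rightarrow> 'u) \<Rightarrow> ('a \<Rightarrow> 'u) \<Rightarrow> ('t \<Rightarrow> 'u)
   \<Rightarrow> (('t \<times> 't) \<times> 'a) set" where
  "pullback_arrows T X r s f =
     {((t', t), g). t' \<in> topspace T \<and> t \<in> topspace T \<and> g \<in> topspace X \<and>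
                    r g = f t' \<and> s g = f t}"

definition pullback_topology ::
  "'t topology \<Rightarrow> 'a topology \<Rightarrow> ('a \<Rightarrow> 'u) \<Rightarrow> ('a \<Rightarrow> 'u) \<Rightarrow> ('t \<Rightarrow> 'u)
   \<Rightarrow> (('t \<times> 't) \<times> 'a) topology" where
  "pullback_topology T X r s f =
     subtopology (prod_topology (prod_topology T T) X) (pullback_arrows T X r s f)"

definition pullback_range :: "(('t \<times> 't) \<times> 'a) \<Rightarrow> 't" where
  "pullback_range p = fst (fst p)"

definition pullback_source :: "(('t \<times> 't) \<times> 'a) \<Rightarrow> 't" where
  "pullback_source p = snd (fst p)"

end

theory Submission
  imports Defs
begin

lemma open_map_prod_same:
  assumes "open_map X Y f"
  shows "open_map (prod_topology X X) (prod_topology Y Y) (\<lambda>(x,y). (f x, f y))"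
  unfolding open_map_def
proof (intro allI impI)
  fix S assume S: "openin (prod_topology X X) S"
  show "openin (prod_topology Y Y) ((\<lambda>(x,y). (f x, f y)) ` S)"
    unfolding openin_prod_topology_alt
  proof (intro allI impI)
    fix a b assume "(a,b) \<in> (\<lambda>(x,y). (f x, f y)) ` S"
    then obtain x y where xy: "(x,y) \<in> S" "a = f x" "b = f y" by auto
    then obtain U V where UV: "openin X U" "openin X V" "x \<in> U" "y \<in> V" "U \<times> V \<subseteq> S"
      using S unfolding openin_prod_topology_alt by meson
    show "\<exists>U V. openin Y U \<and> openin Y V \<and> a \<in> U \<and> b \<in> V \<and> U \<times> V \<subseteq> (\<lambda>(x,y). (f x, f y)) ` S"
    proof (intro exI conjI)
      show "openin Y (f ` U)" "openin Y (f ` V)" using assms UV unfolding open_map_def by auto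
      show "a \<in> f ` U" "b \<in> f ` V" using xy UV by auto
      show "f ` U \<times> f ` V \<subseteq> (\<lambda>(x,y). (f x, f y)) ` S"
      proof
        fix p assume "p \<in> f ` U \<times> f ` V"
        then obtain u v where "u \<in> U" "v \<in> V" "p = (f u, f v)" by auto
        then show "p \<in> (\<lambda>(x,y). (f x, f y)) ` S" using UV(5) by force
      qed
    qed
  qed
qed

lemma partA:
  fixes X :: "'a topology" and U :: "'u topology" and T :: "'t topology"
    and r s :: "'a \<Rightarrow> 'u" and f :: "'t \<Rightarrow> 'u"
  assumes G: "topological_groupoid X U r s e m i"
    and cf: "continuous_map T U f"
    and P: "proper_groupoid X U r s"
  shows "proper_groupoid (pullback_topology T X r s f) T pullback_range pullback_source"
proof -
  have rs: "proper_map X (prod_topology U U) (\<lambda>g. (r g, s g))"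
    using P unfolding proper_groupoid_def by simp
  define Psi :: "('t \<times> 't) \<times> 'a \<Rightarrow> ('t \<times> 't) \<times> ('u \<times> 'u)" where "Psi = (\<lambda>(a, g). (id a, (\<lambda>g. (r g, s g)) g))"
  have 1: "proper_map (prod_topology (prod_topology T T) X)
             (prod_topology (prod_topology T T) (prod_topology U U)) Psi"
    unfolding Psi_def by (subst proper_map_prod) (simp add: rs)
  define V where "V = {(a, (u, v)). a \<in> topspace (prod_topology T T) \<and> u = f (fst a) \<and> v = f (snd a)}"
  have pre: "{x \<in> topspace (prod_topology (prod_topology T T) X). Psi x \<in> V} = pullback_arrows T X r s f"
    unfolding Psi_def V_def pullback_arrows_def by auto
  have 2: "proper_map (pullback_topology T X r s f)
       (subtopology (prod_topology (prod_topology T T) (prod_topology U U)) V) Psi"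
    unfolding pullback_topology_def using proper_map_restriction[OF 1 pre] .
  have "homeomorphic_maps (subtopology (prod_topology (prod_topology T T) (prod_topology U U)) V)
        (prod_topology T T) fst (\<lambda>a. (a, (f (fst a), f (snd a))))"
    unfolding homeomorphic_maps_def
  proof (intro conjI)
    show "continuous_map (subtopology (prod_topology (prod_topology T T) (prod_topology U U)) V)
        (prod_topology T T) fst"
      by (rule continuous_map_from_subtopology) (rule continuous_map_fst)
    have "continuous_map (prod_topology T T) (prod_topology U U) (\<lambda>a. (f (fst a), f (snd a)))"
      using cf by (intro continuous_map_pairedI continuous_map_compose[unfolded o_def, OF continuous_map_fst]
          continuous_map_compose[unfolded o_def, OF continuous_map_snd]) auto
    then have "continuous_map (prod_topology T T) (prod_topology (prod_topology T T) (prod_topology U U))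
        (\<lambda>a. (a, (f (fst a), f (snd a))))"
      by (simp add: continuous_map_paired)
    then show "continuous_map (prod_topology T T)
        (subtopology (prod_topology (prod_topology T T) (prod_topology U U)) V)
        (\<lambda>a. (a, (f (fst a), f (snd a))))"
      by (auto simp: continuous_map_in_subtopology V_def)
  qed (auto simp: V_def)
  then have "homeomorphic_map (subtopology (prod_topology (prod_topology T T) (prod_topology U U)) V)
        (prod_topology T T) fst"
    using homeomorphic_map_maps by blast
  then have 3: "proper_map (subtopology (prod_topology (prod_topology T T) (prod_topology U U)) V)
        (prod_topology T T) fst"
    by (rule homeomorphic_imp_proper_map)
  have eq: "fst \<circ> Psi = (\<lambda>g. (pullback_range g, pullback_source g))"
    unfolding Psi_def pullback_range_def pullback_source_def by (auto simp: fun_eq_iff)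
  show ?thesis
    unfolding proper_groupoid_def using proper_map_compose[OF 2 3] eq by simp
qed

lemma partB:
  fixes X :: "'a topology" and U :: "'u topology" and T :: "'t topology"
    and r s :: "'a \<Rightarrow> 'u" and f :: "'t \<Rightarrow> 'u"
  assumes G: "topological_groupoid X U r s e m i"
    and cf: "continuous_map T U f"
    and P: "proper_groupoid (pullback_topology T X r s f) T pullback_range pullback_source"
    and om: "open_map T U f" and sf: "f ` topspace T = topspace U"
  shows "proper_groupoid X U r s"
proof -
  let ?P = "pullback_topology T X r s f"
  let ?A = "pullback_arrows T X r s f"
  let ?phi = "\<lambda>p::('t \<times> 't) \<times> 'a. (pullback_range p, pullback_source p)"
  let ?rs = "\<lambda>g. (r g, s g)"
  let ?ff = "\<lambda>(x,y). (f x, f y)"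
  have pp: "proper_map ?P (prod_topology T T) ?phi"
    using P unfolding proper_groupoid_def .
  have cr: "continuous_map X U r" and cs: "continuous_map X U s"
    using G unfolding topological_groupoid_def by auto
  have topP: "topspace ?P = ?A"
    unfolding pullback_topology_def pullback_arrows_def by auto
  have csnd: "continuous_map ?P X snd"
    unfolding pullback_topology_def by (rule continuous_map_subtopology_snd)
  have omff: "open_map (prod_topology T T) (prod_topology U U) ?ff"
    by (rule open_map_prod_same[OF om])
  have rsim: "?rs ` topspace X \<subseteq> topspace (prod_topology U U)"
    using cr cs by (auto simp: continuous_map_def)
  have closed: "closed_map X (prod_topology U U) ?rs"
    unfolding closed_map_def
  proof (intro allI impI)
    fix C assume C: "closedin X C"
    define D where "D = {p \<in> topspace ?P. snd p \<in> C}"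
    have "closedin ?P D" unfolding D_def by (rule closedin_continuous_map_preimage[OF csnd C])
    then have E: "closedin (prod_topology T T) (?phi ` D)"
      using pp unfolding proper_map_def closed_map_def by blast
    have Eeq: "?phi ` D = {(a,b). a \<in> topspace T \<and> b \<in> topspace T \<and> (f a, f b) \<in> ?rs ` C}"
      using closedin_subset[OF C]
      by (auto simp: D_def topP pullback_arrows_def pullback_range_def pullback_source_def image_iff)
        (metis subsetD)+
    have Csub: "?rs ` C \<subseteq> topspace (prod_topology U U)"
      using rsim closedin_subset[OF C] by blast
    have "openin (prod_topology T T) (topspace (prod_topology T T) - ?phi ` D)"
      using E by blast
    then have "openin (prod_topology U U) (?ff ` (topspace (prod_topology T T) - ?phi ` D))"
      using omff unfolding open_map_def by blast
    moreover have "?ff ` (topspace (prod_topology T T) - ?phi ` D) = topspace (prod_topology U U) - ?rs ` C"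
    proof
      show "?ff ` (topspace (prod_topology T T) - ?phi ` D) \<subseteq> topspace (prod_topology U U) - ?rs ` C"
        unfolding Eeq using cf by (auto simp: continuous_map_def)
      show "topspace (prod_topology U U) - ?rs ` C \<subseteq> ?ff ` (topspace (prod_topology T T) - ?phi ` D)"
      proof
        fix q assume q: "q \<in> topspace (prod_topology U U) - ?rs ` C"
        obtain x y where xy: "q = (x,y)" by fastforce
        then have "x \<in> f ` topspace T" "y \<in> f ` topspace T" using q sf by auto
        then obtain a b where "a \<in> topspace T" "b \<in> topspace T" "x = f a" "y = f b" by auto
        then show "q \<in> ?ff ` (topspace (prod_topology T T) - ?phi ` D)"
          unfolding Eeq using q xy by (auto intro!: image_eqI[where x="(a,b)"])
      qed
    qed
    ultimately show "closedin (prod_topology U U) (?rs ` C)"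
      using Csub by (metis closedin_def)
  qed
  have fib: "compactin X {g \<in> topspace X. ?rs g = q}" if q: "q \<in> topspace (prod_topology U U)" for q
  proof -
    obtain x y where xy: "q = (x,y)" by fastforce
    then have "x \<in> f ` topspace T" "y \<in> f ` topspace T" using q sf by auto
    then obtain a b where ab: "a \<in> topspace T" "b \<in> topspace T" "x = f a" "y = f b" by auto
    then have "compactin ?P {p \<in> topspace ?P. ?phi p = (a,b)}"
      using pp unfolding proper_map_def by auto
    then have "compactin X (snd ` {p \<in> topspace ?P. ?phi p = (a,b)})"
      using image_compactin csnd by blast
    moreover have "snd ` {p \<in> topspace ?P. ?phi p = (a,b)} = {g \<in> topspace X. ?rs g = q}"
      using ab xy
      by (auto simp: topP pullback_arrows_def pullback_range_def pullback_source_def image_iff)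
    ultimately show ?thesis by simp
  qed
  show ?thesis
    unfolding proper_groupoid_def proper_map_def using closed fib by blast
qed

theorem proposition2p22:
  fixes X :: "'a topology" and U :: "'u topology" and T :: "'t topology"
    and r s :: "'a \<Rightarrow> 'u" and e :: "'u \<Rightarrow> 'a"
    and m :: "'a \<Rightarrow> 'a \<Rightarrow> 'a" and i :: "'a \<Rightarrow> 'a" and f :: "'t \<Rightarrow> 'u"
  assumes "topological_groupoid X U r s e m i"
    and "continuous_map T U f"
  shows "(proper_groupoid X U r s \<longrightarrow>
            proper_groupoid (pullback_topology T X r s f) T pullback_range pullback_source)
       \<and> (proper_groupoid (pullback_topology T X r s f) T pullback_range pullback_source
            \<and> open_map T U f \<and> f ` topspace T = topspace U
            \<longrightarrow> proper_groupoid X U r s)"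
  using partA[OF assms] partB[OF assms] by blast

end
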